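(* For every $\varepsilon>0$ there exists $d_0$ such that for every integer $d\ge d_0$ and every triangle-free graph $G$ on $n$ vertices with maximum degree $d$, \[ \frac{1}{|\mathcal I(G)|}\sum_{I\in\mathcal I(G)}|I| \;\ge\; (1-\varepsilon)\,\frac{\log d}{d}\,n. \] (Equivalently, the average size of an independent set of $G$ is at least $(1+o_d(1))\frac{\log d}{d}n$.)
   Context: $\mathcal I(G)$ denotes the set of all independent sets of $G$ (including the empty set). Logarithms are natural. $o_d(1)$ denotes a quantity tending to $0$ as $d\to\infty$, uniformly over all graphs in question. *)

theory Defs
  imports "HOL-Analysis.Analysis"
begin

definition simple_graph :: "'a set \<Rightarrow> ('a \<Rightarrow> 'a \<Rightarrow> bool) \<Rightarrow> bool" where
  "simple_graph V E \<longleftrightarrow> finite V \<and> (\<forall>x y. E x y \<longrightarrow> x \<in> V \<and> y \<in> V) \<and>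
     (\<forall>x y. E x y \<longrightarrow> E y x) \<and> (\<forall>x. \<not> E x x)"

definition degree :: "'a set \<Rightarrow> ('a \<Rightarrow> 'a \<Rightarrow> bool) \<Rightarrow> 'a \<Rightarrow> nat" where
  "degree V E v = card {u \<in> V. E v u}"

definition max_degree :: "'a set \<Rightarrow> ('a \<Rightarrow> 'a \<Rightarrow> bool) \<Rightarrow> nat" where
  "max_degree V E = Max (insert 0 (degree V E ` V))"

definition triangle_free :: "'a set \<Rightarrow> ('a \<Rightarrow> 'a \<Rightarrow> bool) \<Rightarrow> bool" where
  "triangle_free V E \<longleftrightarrow> \<not> (\<exists>x\<in>V. \<exists>y\<in>V. \<exists>z\<in>V. E x y \<and> E y z \<and> E x z)"

definition independent_sets :: "'a set \<Rightarrow> ('a \<Rightarrow> 'a \<Rightarrow> bool) \<Rightarrow> 'a set set" where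
  "independent_sets V E = {I. I \<subseteq> V \<and> (\<forall>x\<in>I. \<forall>y\<in>I. \<not> E x y)}"

end

theory Submission
  imports Defs "HOL-Real_Asymp.Real_Asymp"
begin


lemma sum_pow_F:
  fixes l :: real
  assumes "finite U"
  shows "(\<Sum>S\<in>Pow U. l ^ card S) = (1 + l) ^ card U"
  using assms
proof (induction U rule: finite_induct)
  case empty then show ?case by simp
next
  case (insert x A)
  have inj: "inj_on (insert x) (Pow A)" using insert.hyps
    unfolding inj_on_def by (metis PowD in_mono insert_ident)
  have disj: "Pow A \<inter> insert x ` Pow A = {}" using insert.hyps by auto
  have c: "\<And>S. S \<in> Pow A \<Longrightarrow> card (insert x S) = Suc (card S)"
    using insert.hyps by (meson PowD card_insert_disjoint finite_subset in_mono)
  have "(\<Sum>S\<in>Pow (insert x A). l ^ card S) = (\<Sum>S\<in>Pow A. l ^ card S) + (\<Sum>S\<in>insert x ` Pow A. l ^ card S)"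
    unfolding Pow_insert using insert.hyps disj by (simp add: sum.union_disjoint)
  also have "(\<Sum>S\<in>insert x ` Pow A. l ^ card S) = (\<Sum>S\<in>Pow A. l ^ card (insert x S))"
    by (simp add: sum.reindex[OF inj])
  also have "\<dots> = l * (\<Sum>S\<in>Pow A. l ^ card S)"
    by (simp add: c sum_distrib_left)
  finally show ?case using insert by (simp add: algebra_simps)
qed

lemma sum_pow_G:
  fixes l :: real
  assumes "finite U"
  shows "(1 + l) * (\<Sum>S\<in>Pow U. real (card S) * l ^ card S) = real (card U) * l * (1 + l) ^ card U"
  using assms
proof (induction U rule: finite_induct)
  case empty then show ?case by simp
next
  case (insert x A)
  have inj: "inj_on (insert x) (Pow A)" using insert.hyps
    unfolding inj_on_def by (metis PowD in_mono insert_ident)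
  have disj: "Pow A \<inter> insert x ` Pow A = {}" using insert.hyps by auto
  have c: "\<And>S. S \<in> Pow A \<Longrightarrow> card (insert x S) = Suc (card S)"
    using insert.hyps by (meson PowD card_insert_disjoint finite_subset in_mono)
  define G where "G = (\<Sum>S\<in>Pow A. real (card S) * l ^ card S)"
  define F where "F = (\<Sum>S\<in>Pow A. l ^ card S)"
  have "(\<Sum>S\<in>Pow (insert x A). real (card S) * l ^ card S) = G + (\<Sum>S\<in>insert x ` Pow A. real (card S) * l ^ card S)"
    unfolding Pow_insert G_def using insert.hyps disj by (simp add: sum.union_disjoint)
  also have "(\<Sum>S\<in>insert x ` Pow A. real (card S) * l ^ card S) = (\<Sum>S\<in>Pow A. real (card (insert x S)) * l ^ card (insert x S))"
    by (simp add: sum.reindex[OF inj])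
  also have "\<dots> = (\<Sum>S\<in>Pow A. l * (real (card S) * l ^ card S) + l * l ^ card S)"
    by (intro sum.cong) (auto simp: c algebra_simps)
  also have "\<dots> = l * G + l * F" unfolding G_def F_def by (simp add: sum.distrib sum_distrib_left)
  finally have e: "(\<Sum>S\<in>Pow (insert x A). real (card S) * l ^ card S) = G + l * G + l * F" by simp
  have F: "F = (1+l)^card A" unfolding F_def using sum_pow_F insert.hyps by blast
  have IH: "(1+l) * G = real (card A) * l * (1+l)^card A" using insert.IH G_def by simp
  have "(1 + l) * (G + l * G + l * F) = (1+l) * ((1+l)*G) + (1+l)*l*F" by (simp add: algebra_simps)
  also have "\<dots> = (real (card A) + 1) * l * (1+l)^(Suc (card A))" unfolding IH F by (simp add: algebra_simps)
  finally show ?case using e insert.hyps by (simp add: algebra_simps)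
qed



lemma decomp:
  fixes f :: "'a set \<Rightarrow> real"
  assumes sg: "simple_graph V E" and tf: "triangle_free V E" and v: "v \<in> V"
  shows "(\<Sum>I\<in>independent_sets V E. f I) =
    (\<Sum>J\<in>independent_sets (V - insert v {u\<in>V. E v u}) E.
        f (insert v J) + (\<Sum>S\<in>Pow {u\<in>V. E v u \<and> (\<forall>j\<in>J. \<not> E u j)}. f (J \<union> S)))"
proof -
  define N where "N = {u\<in>V. E v u}"
  define U where "U J = {u\<in>V. E v u \<and> (\<forall>j\<in>J. \<not> E u j)}" for J
  define II where "II = independent_sets V E"
  define JJ where "JJ = independent_sets (V - insert v N) E"
  have finV: "finite V" and inV: "\<And>x y. E x y \<Longrightarrow> x \<in> V \<and> y \<in> V"
    and sym: "\<And>x y. E x y \<Longrightarrow> E y x" and irr: "\<And>x. \<not> E x x"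
    using sg unfolding simple_graph_def by auto
  have tri: "\<And>x y z. E x y \<Longrightarrow> E y z \<Longrightarrow> E x z \<Longrightarrow> False"
    using tf inV unfolding triangle_free_def by blast
  have finII: "finite II" unfolding II_def independent_sets_def
    by (rule finite_subset[of _ "Pow V"]) (use finV in auto)
  have finJJ: "finite JJ" unfolding JJ_def independent_sets_def
    by (rule finite_subset[of _ "Pow V"]) (use finV in auto)
  define g where "g I = I - insert v N" for I
  have gimg: "g ` II \<subseteq> JJ" unfolding g_def II_def JJ_def independent_sets_def by auto
  have fiber: "{I. I \<in> II \<and> g I = J} = insert (insert v J) ((\<lambda>S. J \<union> S) ` Pow (U J))"
    if J: "J \<in> JJ" for J
  proof (intro equalityI subsetI)
    fix I assume "I \<in> {I. I \<in> II \<and> g I = J}"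
    then have I: "I \<in> II" and gI: "g I = J" by auto
    have Iind: "I \<subseteq> V" "\<And>x y. x \<in> I \<Longrightarrow> y \<in> I \<Longrightarrow> \<not> E x y"
      using I unfolding II_def independent_sets_def by auto
    show "I \<in> insert (insert v J) ((\<lambda>S. J \<union> S) ` Pow (U J))"
    proof (cases "v \<in> I")
      case True
      then have "I \<inter> N = {}" using Iind unfolding N_def by auto
      then have "I = insert v J" using gI True unfolding g_def by auto
      then show ?thesis by simp
    next
      case False
      have "I = J \<union> (I \<inter> N)" using gI False unfolding g_def by auto
      moreover have "I \<inter> N \<subseteq> U J" using Iind gI unfolding U_def N_def g_def by auto
      ultimately show ?thesis by blast
    qed
  next
    fix I assume "I \<in> insert (insert v J) ((\<lambda>S. J \<union> S) ` Pow (U J))"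
    have Jind: "J \<subseteq> V - insert v N" "\<And>x y. x \<in> J \<Longrightarrow> y \<in> J \<Longrightarrow> \<not> E x y"
      using J unfolding JJ_def independent_sets_def by auto
    then consider "I = insert v J" | S where "S \<subseteq> U J" "I = J \<union> S"
      using \<open>I \<in> _\<close> by auto
    then show "I \<in> {I. I \<in> II \<and> g I = J}"
    proof cases
      case 1
      have "I \<in> II" unfolding 1 II_def independent_sets_def
        using Jind v irr sym unfolding N_def by auto
      moreover have "g I = J" unfolding 1 g_def using Jind by auto
      ultimately show ?thesis by auto
    next
      case 2
      have "I \<in> II" unfolding 2 II_def independent_sets_def
      proof (intro CollectI conjI ballI)
        show "J \<union> S \<subseteq> V" using 2 Jind unfolding U_def by auto
        fix x y assume "x \<in> J \<union> S" "y \<in> J \<union> S"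
        then consider "x \<in> J" "y \<in> J" | "x \<in> J" "y \<in> S" | "x \<in> S" "y \<in> J" | "x \<in> S" "y \<in> S" by blast
        then show "\<not> E x y"
        proof cases
          case 1 then show ?thesis using Jind by blast
        next
          case 2 then have "\<not> E y x" using 2 \<open>S \<subseteq> U J\<close> unfolding U_def by blast
          then show ?thesis using sym by blast
        next
          case 3 then show ?thesis using \<open>S \<subseteq> U J\<close> unfolding U_def by blast
        next
          case 4 then have "E v x" "E v y" using \<open>S \<subseteq> U J\<close> unfolding U_def by auto
          then show ?thesis using tri by blast
        qed
      qed
      moreover have "g I = J" unfolding 2 g_def using Jind 2(1) unfolding U_def N_def by auto
      ultimately show ?thesis by auto
    qed
  qed
  have "(\<Sum>I\<in>II. f I) = (\<Sum>J\<in>JJ. \<Sum>I\<in>{I. I \<in> II \<and> g I = J}. f I)"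
    using sum.group[OF finII finJJ gimg, of f] by simp
  also have "\<dots> = (\<Sum>J\<in>JJ. f (insert v J) + (\<Sum>S\<in>Pow (U J). f (J \<union> S)))"
  proof (intro sum.cong refl)
    fix J assume J: "J \<in> JJ"
    have Jsub: "J \<subseteq> V - insert v N" using J unfolding JJ_def independent_sets_def by auto
    have finU: "finite (U J)" unfolding U_def using finV by auto
    have nin: "insert v J \<notin> (\<lambda>S. J \<union> S) ` Pow (U J)"
    proof
      assume "insert v J \<in> (\<lambda>S. J \<union> S) ` Pow (U J)"
      then obtain S where S: "S \<subseteq> U J" "insert v J = J \<union> S" by auto
      then have "v \<in> S" using Jsub by auto
      then show False using S(1) irr unfolding U_def by auto
    qed
    have inj: "inj_on (\<lambda>S. J \<union> S) (Pow (U J))"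
      unfolding inj_on_def using Jsub unfolding U_def N_def by blast
    show "(\<Sum>I\<in>{I. I \<in> II \<and> g I = J}. f I) = f (insert v J) + (\<Sum>S\<in>Pow (U J). f (J \<union> S))"
      unfolding fiber[OF J] using finU nin by (simp add: sum.reindex[OF inj])
  qed
  finally show ?thesis unfolding II_def JJ_def N_def U_def .
qed



lemma pointwise:
  fixes l th d c Q :: real and y :: nat
  assumes l: "l > 0" and th: "0 \<le> th" "th \<le> 1" and d: "d > 0" and c: "c \<ge> 0" and Q: "Q > 0"
    and h1: "th * l \<ge> c * (l + Q)"
    and h2: "(1 - th) * ln Q \<ge> c * d * (1 + l) * (1 + l / Q)"
  shows "th * l + (1 - th) / d * (real y * l * (1 + l) ^ y / (1 + l)) \<ge> c * (l + (1 + l) ^ y)"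
proof -
  define q where "q = (1 + l) ^ y"
  have qpos: "q > 0" unfolding q_def using l by simp
  have T2: "(1 - th) / d * (real y * l * q / (1 + l)) \<ge> 0"
    using th d l qpos by (intro mult_nonneg_nonneg divide_nonneg_pos) auto
  show ?thesis
  proof (cases "q \<le> Q")
    case True
    have "c * (l + q) \<le> c * (l + Q)" using True c by (intro mult_left_mono) auto
    then show ?thesis using h1 T2 unfolding q_def by linarith
  next
    case False
    then have "ln Q < ln q" using Q by simp
    also have "ln q = real y * ln (1 + l)" unfolding q_def using l by (simp add: ln_realpow)
    also have "\<dots> \<le> real y * l" using l by (intro mult_left_mono ln_add_one_self_le_self) auto
    finally have yl: "ln Q \<le> real y * l" by simp
    have "(1 - th) * ln Q \<le> (1 - th) * (real y * l)" using yl th by (intro mult_left_mono) auto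
    have "c * (l + q) \<le> c * (q + l * q / Q)"
    proof -
      have "l \<le> l * q / Q" using False l Q by (simp add: field_simps)
      then show ?thesis using c by (intro mult_left_mono) auto
    qed
    also have "\<dots> = q / (d * (1 + l)) * (c * d * (1 + l) * (1 + l / Q))"
    proof -
      have "d * (1 + l) \<noteq> 0" using d l by simp
      then have "q / (d * (1 + l)) * (c * d * (1 + l) * (1 + l / Q)) = c * q * (1 + l / Q)" by simp
      then show ?thesis by (simp add: algebra_simps)
    qed
    also have "\<dots> \<le> q / (d * (1 + l)) * ((1 - th) * ln Q)"
      using h2 qpos d l by (intro mult_left_mono) auto
    also have "\<dots> \<le> q / (d * (1 + l)) * ((1 - th) * (real y * l))"
      using \<open>(1 - th) * ln Q \<le> _\<close> by (rule mult_left_mono) (use qpos d l in auto)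
    also have "\<dots> = (1 - th) / d * (real y * l * q / (1 + l))"
      using d l by (simp add: field_simps)
    finally show ?thesis using th l unfolding q_def by (smt (verit) mult_nonneg_nonneg)
  qed
qed

lemma cheb:
  fixes A :: "'a set set" and l :: real
  assumes fin: "finite A" and l: "0 < l" "l \<le> 1"
  shows "real (card A) * (\<Sum>I\<in>A. real (card I) * l ^ card I)
         \<le> (\<Sum>I\<in>A. real (card I)) * (\<Sum>I\<in>A. l ^ card I)"
proof -
  define a where "a (I::'a set) = real (card I)" for I
  define w where "w (I::'a set) = l ^ card I" for I
  have trm: "(a I - a J) * (w I - w J) \<le> 0" for I J
  proof (cases "card I \<le> card J")
    case True
    then have "w J \<le> w I" unfolding w_def using l by (intro power_decreasing) auto
    moreover have "a I \<le> a J" unfolding a_def using True by simp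
    ultimately show ?thesis by (simp add: mult_nonpos_nonneg)
  next
    case False
    then have "w I \<le> w J" unfolding w_def using l by (intro power_decreasing) auto
    moreover have "a J \<le> a I" unfolding a_def using False by simp
    ultimately show ?thesis by (simp add: mult_nonneg_nonpos)
  qed
  have "(\<Sum>I\<in>A. \<Sum>J\<in>A. (a I - a J) * (w I - w J)) \<le> 0"
    using trm by (intro sum_nonpos) auto
  moreover have "(\<Sum>I\<in>A. \<Sum>J\<in>A. (a I - a J) * (w I - w J))
      = 2 * (real (card A) * (\<Sum>I\<in>A. a I * w I)) - 2 * ((\<Sum>I\<in>A. a I) * (\<Sum>I\<in>A. w I))"
    by (simp add: algebra_simps sum.distrib sum_subtractf sum_distrib_left sum_distrib_right
        sum.swap[of "\<lambda>I J. a J * w I"])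
  ultimately show ?thesis unfolding a_def w_def by simp
qed



lemma main_bound:
  fixes V :: "'a set" and l th c Q :: real and d :: nat
  assumes sg: "simple_graph V E" and tf: "triangle_free V E" and md: "max_degree V E = d"
    and d: "d > 0" and l: "0 < l" "l \<le> 1" and th: "0 \<le> th" "th \<le> 1" and c: "c \<ge> 0" and Q: "Q > 0"
    and h1: "th * l \<ge> c * (l + Q)"
    and h2: "(1 - th) * ln Q \<ge> c * real d * (1 + l) * (1 + l / Q)"
  shows "(\<Sum>I\<in>independent_sets V E. real (card I)) / real (card (independent_sets V E)) \<ge> c * real (card V)"
proof -
  define II where "II = independent_sets V E"
  define N where "N v = {u\<in>V. E v u}" for v
  define F where "F v I = l ^ card I * (th * of_bool (v \<in> I) + (1 - th) / real d * real (card (I \<inter> N v)) - c)" for v I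
  have finV: "finite V" and inV: "\<And>x y. E x y \<Longrightarrow> x \<in> V \<and> y \<in> V"
    and sym: "\<And>x y. E x y \<Longrightarrow> E y x" and irr: "\<And>x. \<not> E x x"
    using sg unfolding simple_graph_def by auto
  have finII: "finite II" unfolding II_def independent_sets_def
    by (rule finite_subset[of _ "Pow V"]) (use finV in auto)
  have IIsub: "\<And>I. I \<in> II \<Longrightarrow> I \<subseteq> V" unfolding II_def independent_sets_def by auto
  have dpos: "real d > 0" using d by simp
  have loc: "(\<Sum>I\<in>II. F v I) \<ge> 0" if v: "v \<in> V" for v
  proof -
    define U where "U J = {u\<in>V. E v u \<and> (\<forall>j\<in>J. \<not> E u j)}" for J
    have "(\<Sum>I\<in>II. F v I) = (\<Sum>J\<in>independent_sets (V - insert v (N v)) E.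
        F v (insert v J) + (\<Sum>S\<in>Pow (U J). F v (J \<union> S)))"
      unfolding II_def N_def U_def by (rule decomp[OF sg tf v])
    also have "\<dots> \<ge> 0"
    proof (intro sum_nonneg)
      fix J assume J: "J \<in> independent_sets (V - insert v (N v)) E"
      have Jsub: "J \<subseteq> V - insert v (N v)" using J unfolding independent_sets_def by auto
      have finJ: "finite J" using Jsub finV finite_subset by blast
      have finU: "finite (U J)" unfolding U_def using finV by auto
      have UN: "U J \<subseteq> N v" unfolding U_def N_def by auto
      have vU: "v \<notin> U J" unfolding U_def using irr by auto
      have f1: "F v (insert v J) = l ^ card J * (l * (th - c))"
      proof -
        have "v \<notin> J" using Jsub by auto
        moreover have "insert v J \<inter> N v = {}" using Jsub irr unfolding N_def by auto
        ultimately show ?thesis unfolding F_def using finJ by simp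
      qed
      have f2: "F v (J \<union> S) = l ^ card J * ((1 - th) / real d * (real (card S) * l ^ card S) - c * l ^ card S)"
        if S: "S \<in> Pow (U J)" for S
      proof -
        have finS: "finite S" using S finU finite_subset by auto
        have disj: "J \<inter> S = {}" using S UN Jsub by auto
        have cardU: "card (J \<union> S) = card J + card S" using card_Un_disjoint[OF finJ finS disj] .
        have "v \<notin> J \<union> S" using S vU Jsub by auto
        moreover have "(J \<union> S) \<inter> N v = S" using S UN Jsub by auto
        ultimately show ?thesis unfolding F_def cardU by (simp add: power_add algebra_simps)
      qed
      define y where "y = card (U J)"
      have sumF: "(\<Sum>S\<in>Pow (U J). l ^ card S) = (1 + l) ^ y" unfolding y_def using sum_pow_F[OF finU] .
      have sumG: "(\<Sum>S\<in>Pow (U J). real (card S) * l ^ card S) = real y * l * (1 + l) ^ y / (1 + l)"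
        using sum_pow_G[OF finU, of l] l unfolding y_def by (simp add: field_simps)
      have "F v (insert v J) + (\<Sum>S\<in>Pow (U J). F v (J \<union> S))
          = l ^ card J * (l * (th - c)) + l ^ card J * ((1 - th) / real d * (\<Sum>S\<in>Pow (U J). real (card S) * l ^ card S)
              - c * (\<Sum>S\<in>Pow (U J). l ^ card S))"
      proof -
        have "(\<Sum>S\<in>Pow (U J). F v (J \<union> S)) = (\<Sum>S\<in>Pow (U J). l ^ card J * ((1 - th) / real d * (real (card S) * l ^ card S) - c * l ^ card S))"
          by (rule sum.cong[OF refl f2])
        also have "\<dots> = l ^ card J * ((1 - th) / real d * (\<Sum>S\<in>Pow (U J). real (card S) * l ^ card S)
              - c * (\<Sum>S\<in>Pow (U J). l ^ card S))"
          by (simp only: sum_distrib_left[symmetric] sum_subtractf)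
        finally show ?thesis using f1 by simp
      qed
      also have "\<dots> = l ^ card J * ((th * l + (1 - th) / real d * (real y * l * (1 + l) ^ y / (1 + l)))
              - c * (l + (1 + l) ^ y))"
        unfolding sumF sumG by (simp add: algebra_simps)
      also have "\<dots> \<ge> 0"
        using pointwise[OF l(1) th dpos c Q h1 h2, of y] l by simp
      finally show "0 \<le> F v (insert v J) + (\<Sum>S\<in>Pow (U J). F v (J \<union> S))" .
    qed
    finally show ?thesis .
  qed
  have "0 \<le> (\<Sum>v\<in>V. \<Sum>I\<in>II. F v I)" by (rule sum_nonneg) (use loc in auto)
  also have "\<dots> = (\<Sum>I\<in>II. \<Sum>v\<in>V. F v I)" by (rule sum.swap)
  also have "\<dots> \<le> (\<Sum>I\<in>II. l ^ card I * (real (card I) - c * real (card V)))"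
  proof (intro sum_mono)
    fix I assume I: "I \<in> II"
    have IV: "I \<subseteq> V" using IIsub I .
    have finI: "finite I" using IV finV finite_subset by blast
    have s1: "(\<Sum>v\<in>V. of_bool (v \<in> I) :: real) = real (card I)"
      using IV finV by (simp add: Int_absorb1 flip: sum.inter_filter)
    have cI: "real (card (I \<inter> N v)) = (\<Sum>u\<in>I. of_bool (E v u))" for v
    proof -
      have "I \<inter> N v = {u\<in>I. E v u}" using IV unfolding N_def by auto
      moreover have "real (card {u\<in>I. E v u}) = (\<Sum>u\<in>I. of_bool (E v u))"
        using finI by (simp add: Int_def flip: sum.inter_filter)
      ultimately show ?thesis by simp
    qed
    have deg: "(\<Sum>v\<in>V. of_bool (E v u) :: real) \<le> real d" if u: "u \<in> V" for u
    proof -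
      have "(\<Sum>v\<in>V. of_bool (E v u) :: real) = real (card {v\<in>V. E v u})"
        using finV by (simp add: Int_def flip: sum.inter_filter)
      also have "{v\<in>V. E v u} = {v\<in>V. E u v}" using sym by blast
      also have "card {v\<in>V. E u v} = degree V E u" unfolding degree_def ..
      also have "degree V E u \<le> max_degree V E" unfolding max_degree_def
        using finV u by (intro Max_ge) auto
      finally show ?thesis using md by simp
    qed
    have s2: "(\<Sum>v\<in>V. real (card (I \<inter> N v))) \<le> real d * real (card I)"
    proof -
      have "(\<Sum>v\<in>V. real (card (I \<inter> N v))) = (\<Sum>u\<in>I. \<Sum>v\<in>V. of_bool (E v u))"
        unfolding cI by (rule sum.swap)
      also have "\<dots> \<le> (\<Sum>u\<in>I. real d)" using deg IV by (intro sum_mono) auto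
      finally show ?thesis by (simp add: mult.commute)
    qed
    have "(\<Sum>v\<in>V. F v I) = l ^ card I * (th * (\<Sum>v\<in>V. of_bool (v \<in> I)) + (1 - th) / real d * (\<Sum>v\<in>V. real (card (I \<inter> N v))) - c * real (card V))"
      unfolding F_def by (simp add: sum_distrib_left sum_subtractf sum.distrib algebra_simps)
    also have "\<dots> \<le> l ^ card I * (th * real (card I) + (1 - th) / real d * (real d * real (card I)) - c * real (card V))"
      unfolding s1 using s2 th dpos l
      by (intro mult_left_mono add_mono diff_mono order_refl) auto
    also have "\<dots> = l ^ card I * (real (card I) - c * real (card V))"
      using dpos by (simp add: field_simps)
    finally show "(\<Sum>v\<in>V. F v I) \<le> l ^ card I * (real (card I) - c * real (card V))" .
  qed
  finally have key: "c * real (card V) * (\<Sum>I\<in>II. l ^ card I) \<le> (\<Sum>I\<in>II. real (card I) * l ^ card I)"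
    by (simp add: algebra_simps sum_subtractf sum_distrib_left)
  have emp: "{} \<in> II" unfolding II_def independent_sets_def by auto
  have Wpos: "(\<Sum>I\<in>II. l ^ card I) > 0"
  proof -
    have "(\<Sum>I\<in>II. l ^ card I) = l ^ card ({}::'a set) + (\<Sum>I\<in>II - {{}}. l ^ card I)"
      by (rule sum.remove[OF finII emp])
    moreover have "(\<Sum>I\<in>II - {{}}. l ^ card I) \<ge> 0" using l by (intro sum_nonneg) auto
    ultimately show ?thesis by simp
  qed
  have Npos: "real (card II) > 0" using emp finII card_gt_0_iff by auto
  have ch: "real (card II) * (\<Sum>I\<in>II. real (card I) * l ^ card I) \<le> (\<Sum>I\<in>II. real (card I)) * (\<Sum>I\<in>II. l ^ card I)"
    using cheb[OF finII l] .
  have "c * real (card V) * (\<Sum>I\<in>II. l ^ card I) * real (card II) \<le> (\<Sum>I\<in>II. real (card I)) * (\<Sum>I\<in>II. l ^ card I)"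
    using key ch Npos by (smt (verit) mult.commute mult_right_mono)
  then have "c * real (card V) * real (card II) \<le> (\<Sum>I\<in>II. real (card I))"
    using Wpos by (simp add: algebra_simps)
  then show ?thesis unfolding II_def[symmetric] using Npos by (simp add: field_simps)
qed



lemma lim1: "((\<lambda>x::real. (ln x)^2 / x) \<longlongrightarrow> 0) at_top" by real_asymp
lemma lim2: "((\<lambda>x::real. ln (ln x) / ln x) \<longlongrightarrow> 0) at_top" by real_asymp

lemma params:
  fixes x e :: real
  assumes e: "0 < e" "e \<le> 1/2" and x: "x \<ge> 3" and L1: "1 \<le> ln x"
    and b: "(ln x)^2 / x \<le> e/8" and cc: "ln (ln x) / ln x \<le> e/8"
    and dd: "4/e * (3 - ln (e/4)) \<le> ln x"
  shows "e/2 * x / (ln x)^2 - 1 / ln x > 0 \<and>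
    e/2 * (1 / ln x) \<ge> (1 - e) * ln x / x * (1 / ln x + (e/2 * x / (ln x)^2 - 1 / ln x)) \<and>
    (1 - e/2) * ln (e/2 * x / (ln x)^2 - 1 / ln x) \<ge>
       (1 - e) * ln x / x * x * (1 + 1 / ln x) * (1 + (1 / ln x) / (e/2 * x / (ln x)^2 - 1 / ln x))"
proof -
  define L where "L = ln x"
  define Q where "Q = e/2 * x / L^2 - 1 / L"
  have xpos: "x > 0" using x by simp
  have Lpos: "L > 0" "L \<ge> 1" using L1 unfolding L_def by auto
  have b': "L^2 \<le> e/8 * x" using b xpos unfolding L_def by (simp add: field_simps)
  have c': "ln L \<le> e/8 * L" using cc Lpos unfolding L_def by (simp add: field_simps)
  have d': "3 - ln (e/4) \<le> e/4 * L" using dd e unfolding L_def by (simp add: field_simps)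
  have big: "e/2 * x \<ge> 4 * L^2" using b' by simp
  have L2: "L \<le> L^2" using Lpos by (simp add: power2_eq_square)
  have Qlow: "Q \<ge> e/2 * x / (2 * L^2)"
  proof -
    have "e/2 * x / (2 * L^2) \<ge> 1"
    proof -
      have L2p: "2 * L^2 > 0" using Lpos by simp
      have "2 * L^2 \<le> e/2 * x" using big L2p by linarith
      then show ?thesis using L2p by (simp add: le_divide_eq)
    qed
    moreover have "1 / L \<le> 1" using Lpos by simp
    ultimately have "1 / L \<le> e/2 * x / (2 * L^2)" by linarith
    then show ?thesis unfolding Q_def by (simp add: field_simps)
  qed
  have Q1: "Q \<ge> 1"
  proof -
    have "e/2 * x / (2 * L^2) \<ge> 1"
    proof -
      have L2p: "2 * L^2 > 0" using Lpos by simp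
      have "2 * L^2 \<le> e/2 * x" using big L2p by linarith
      then show ?thesis using L2p by (simp add: le_divide_eq)
    qed
    then show ?thesis using Qlow by simp
  qed
  have h1: "e/2 * (1 / L) \<ge> (1 - e) * L / x * (1 / L + Q)"
  proof -
    have "1 / L + Q = e/2 * x / L^2" unfolding Q_def by simp
    then have "(1 - e) * L / x * (1 / L + Q) = (1 - e) * L / x * (e/2 * x / L^2)" by simp
    also have "\<dots> = (1 - e) * (e/2) / L"
      using xpos Lpos by (simp add: field_simps power2_eq_square)
    also have "\<dots> \<le> e/2 * (1/L)" using e Lpos by (simp add: field_simps)
    finally show ?thesis .
  qed
  have lnQ: "ln Q \<ge> ln (e/4) + L - 2 * ln L"
  proof -
    have pos: "e/2 * x / (2 * L^2) > 0" using e xpos Lpos by simp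
    have "ln Q \<ge> ln (e/2 * x / (2 * L^2))" using Qlow pos by simp
    also have "ln (e/2 * x / (2 * L^2)) = ln (e/4) + ln x - 2 * ln L"
      using e xpos Lpos by (simp add: ln_div ln_mult ln_realpow field_simps)
    finally show ?thesis unfolding L_def by simp
  qed
  have lnL: "ln L \<ge> 0" using Lpos by simp
  have le4: "ln (e/4) < 0" using e by simp
  have rhs: "(1 - e) * L / x * x * (1 + 1 / L) * (1 + (1 / L) / Q) \<le> (1 - e) * L + 3"
  proof -
    have "(1 / L) / Q \<le> 1 / L" using Q1 Lpos by (simp add: field_simps)
    then have "(1 + (1 / L) / Q) \<le> 1 + 1/L" by simp
    have A: "(1 - e) * L / x * x * (1 + 1 / L) = (1 - e) * (L + 1)" using xpos Lpos by (simp add: field_simps)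
    have "(1 - e) * (L + 1) * (1 + (1 / L) / Q) \<le> (1 - e) * (L + 1) * (1 + 1 / L)"
      using \<open>_ \<le> 1 + 1/L\<close> e Lpos by (intro mult_left_mono) auto
    also have "\<dots> = (1 - e) * (L + 2 + 1 / L)" using Lpos by (simp add: field_simps)
    also have "\<dots> \<le> (1 - e) * L + 3"
    proof -
      have "1 / L \<le> 1" using Lpos by simp
      then have "(1 - e) * (2 + 1 / L) \<le> 1 * 3" using e Lpos by (intro mult_mono) auto
      then show ?thesis by (simp add: algebra_simps)
    qed
    finally show ?thesis using A by simp
  qed
  have lhs: "(1 - e/2) * ln Q \<ge> (1 - e/2) * (ln (e/4) + L - 2 * ln L)"
    using lnQ e by (intro mult_left_mono) auto
  have "(1 - e/2) * (ln (e/4) + L - 2 * ln L) \<ge> (1 - e) * L + 3"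
  proof -
    define M where "M = 2 * ln L - ln (e/4)"
    have M0: "M \<ge> 0" unfolding M_def using lnL le4 by simp
    have "(1 - e/2) * (ln (e/4) + L - 2 * ln L) = (1 - e/2) * L - (1 - e/2) * M"
      unfolding M_def by (simp add: algebra_simps)
    also have "\<dots> \<ge> (1 - e/2) * L - M" using M0 e by (simp add: mult_nonneg_nonneg algebra_simps)
    finally have "(1 - e/2) * (ln (e/4) + L - 2 * ln L) \<ge> (1 - e/2) * L - M" .
    moreover have "e/2 * L \<ge> M + 3" unfolding M_def using c' d' by simp
    ultimately show ?thesis by (simp add: algebra_simps)
  qed
  then have h2: "(1 - e/2) * ln Q \<ge> (1 - e) * L / x * x * (1 + 1 / L) * (1 + (1 / L) / Q)"
    using lhs rhs by linarith
  have Qpos: "Q > 0" using Q1 by simp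
  show ?thesis using Qpos h1 h2 unfolding Q_def L_def by simp
qed


theorem theorem1p1:
  "\<forall>\<epsilon>::real. \<epsilon> > 0 \<longrightarrow> (\<exists>d0::nat. \<forall>d::nat. d \<ge> d0 \<longrightarrow>
     (\<forall>(V::nat set) E. simple_graph V E \<and> triangle_free V E \<and> max_degree V E = d \<longrightarrow>
        (\<Sum>I\<in>independent_sets V E. real (card I)) / real (card (independent_sets V E))
          \<ge> (1 - \<epsilon>) * (ln (real d) / real d) * real (card V)))"
proof (intro allI impI)
  fix \<epsilon> :: real assume eps: "\<epsilon> > 0"
  define e where "e = min \<epsilon> (1/2)"
  have e: "0 < e" "e \<le> 1/2" "e \<le> \<epsilon>" unfolding e_def using eps by auto
  define P where "P x \<longleftrightarrow> x \<ge> 3 \<and> 1 \<le> ln x \<and> (ln x)^2 / x \<le> e/8 \<and> ln (ln x) / ln x \<le> e/8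
      \<and> 4/e * (3 - ln (e/4)) \<le> ln x" for x :: real
  have ln_top: "\<And>Z. eventually (\<lambda>x::real. Z \<le> ln x) at_top"
    using ln_at_top filterlim_at_top by blast
  have ev1: "eventually (\<lambda>x::real. (ln x)^2 / x < e/8) at_top"
    by (rule order_tendstoD(2)[OF lim1]) (use e in simp)
  have ev2: "eventually (\<lambda>x::real. ln (ln x) / ln x < e/8) at_top"
    by (rule order_tendstoD(2)[OF lim2]) (use e in simp)
  have ev: "eventually P at_top"
    using eventually_ge_at_top[of "3::real"] ln_top[of 1] ln_top[of "4/e * (3 - ln (e/4))"] ev1 ev2
    unfolding P_def by eventually_elim auto
  have "eventually (\<lambda>d. P (real d)) sequentially"
    by (rule eventually_compose_filterlim[OF ev filterlim_real_sequentially])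
  then obtain d0 where d0: "\<And>d. d \<ge> d0 \<Longrightarrow> P (real d)" by (auto simp: eventually_sequentially)
  show "\<exists>d0::nat. \<forall>d::nat. d \<ge> d0 \<longrightarrow>
     (\<forall>(V::nat set) E. simple_graph V E \<and> triangle_free V E \<and> max_degree V E = d \<longrightarrow>
        (\<Sum>I\<in>independent_sets V E. real (card I)) / real (card (independent_sets V E))
          \<ge> (1 - \<epsilon>) * (ln (real d) / real d) * real (card V))"
  proof (intro exI allI impI)
    fix d :: nat and V :: "nat set" and E
    assume dd: "d0 \<le> d" and G: "simple_graph V E \<and> triangle_free V E \<and> max_degree V E = d"
    have Pd: "P (real d)" using d0 dd by blast
    define x where "x = real d"
    have x3: "x \<ge> 3" and L1: "1 \<le> ln x" using Pd unfolding P_def x_def by auto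
    have dpos: "d > 0" using x3 unfolding x_def by simp
    have prm: "e/2 * x / (ln x)^2 - 1 / ln x > 0 \<and>
      e/2 * (1 / ln x) \<ge> (1 - e) * ln x / x * (1 / ln x + (e/2 * x / (ln x)^2 - 1 / ln x)) \<and>
      (1 - e/2) * ln (e/2 * x / (ln x)^2 - 1 / ln x) \<ge>
       (1 - e) * ln x / x * x * (1 + 1 / ln x) * (1 + (1 / ln x) / (e/2 * x / (ln x)^2 - 1 / ln x))"
      using Pd unfolding P_def x_def[symmetric] by (intro params[OF e(1,2)]) auto
    have c0: "(1 - e) * ln x / x \<ge> 0" using e L1 x3 by simp
    have lpos: "0 < 1 / ln x" "1 / ln x \<le> 1" using L1 by auto
    have mb: "(\<Sum>I\<in>independent_sets V E. real (card I)) / real (card (independent_sets V E))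
        \<ge> (1 - e) * ln x / x * real (card V)"
      using main_bound[of V E d "1 / ln x" "e/2" "(1 - e) * ln x / x" "e/2 * x / (ln x)^2 - 1 / ln x"]
        G dpos lpos e c0 prm unfolding x_def by auto
    have "(1 - \<epsilon>) * (ln x / x) * real (card V) \<le> (1 - e) * (ln x / x) * real (card V)"
      using e L1 x3 by (intro mult_right_mono) auto
    then show "(1 - \<epsilon>) * (ln (real d) / real d) * real (card V) \<le>
        (\<Sum>I\<in>independent_sets V E. real (card I)) / real (card (independent_sets V E))"
      using mb unfolding x_def by simp
  qed
qed

end
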